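(* The Rudin-Shapiro sequence $\mathbf{r}$ has an unbordered factor of every length $n \geq 0$.
   Context: For a word $w \in 1\{0,1\}^*$ and integer $n \geq 0$, let $a_w(n)$ be the number of (possibly overlapping) occurrences of $w$ as a factor of the ordinary (most significant digit first) base-$2$ representation of $n$. The Rudin-Shapiro sequence is $\mathbf{r} = r(0)r(1)r(2)\cdots$ with $r(n) = (-1)^{a_{11}(n)}$, a sequence over $\{1,-1\}$. A factor of length $n$ of $\mathbf{r}$ is a word $r(i)r(i+1)\cdots r(i+n-1)$ for some $i \geq 0$. A finite word $w$ is bordered if there is a word $x$ with $0 < |x| \leq |w|/2$ such that $w$ both begins and ends with $x$; otherwise $w$ is unbordered. *)

theory Defs
  imports Main
begin

fun bin :: "nat \<Rightarrow> nat list" where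
  "bin n = (if n = 0 then [] else bin (n div 2) @ [n mod 2])"

declare bin.simps[simp del]

definition occ :: "'a list \<Rightarrow> 'a list \<Rightarrow> nat" where
  "occ w v = card {i. i + length w \<le> length v \<and> take (length w) (drop i v) = w}"

definition a_w :: "nat list \<Rightarrow> nat \<Rightarrow> nat" where
  "a_w w n = occ w (bin n)"

definition rs :: "nat \<Rightarrow> int" where
  "rs n = (-1) ^ a_w [1,1] n"

definition factor :: "(nat \<Rightarrow> 'a) \<Rightarrow> nat \<Rightarrow> nat \<Rightarrow> 'a list" where
  "factor s i n = map s [i..<i+n]"

definition bordered :: "'a list \<Rightarrow> bool" where
  "bordered w \<longleftrightarrow> (\<exists>x. 0 < length x \<and> 2 * length x \<le> length w
                          \<and> take (length x) w = x
                          \<and> drop (length w - length x) w = x)"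

definition unbordered :: "'a list \<Rightarrow> bool" where
  "unbordered w \<longleftrightarrow> \<not> bordered w"

end

theory Submission
  imports Defs
begin

lemma take2_drop: "Suc i < length v \<Longrightarrow> take (Suc (Suc 0)) (drop i v) = [v!i, v!Suc i]"
proof -
  assume h: "Suc i < length v"
  have "drop i v = v!i # drop (Suc i) v" using h by (simp add: Cons_nth_drop_Suc)
  also have "drop (Suc i) v = v!Suc i # drop (Suc (Suc i)) v" using h by (simp add: Cons_nth_drop_Suc)
  finally show ?thesis by simp
qed

lemma occ11_alt: "occ [1,1] v = card {i. Suc i < length v \<and> v!i = (1::nat) \<and> v!Suc i = 1}"
proof -
  have "{i. i + length [1,1] \<le> length v \<and> take (length [1,1]) (drop i v) = [1::nat,1]}
      = {i. Suc i < length v \<and> v!i = 1 \<and> v!Suc i = 1}"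
    by (auto simp: take2_drop)
  thus ?thesis unfolding occ_def by simp
qed

lemma occ11_snoc: "occ [1,1] (xs @ [x]) = occ [1,1] xs + (if xs \<noteq> [] \<and> last xs = 1 \<and> x = (1::nat) then 1 else 0)"
proof -
  let ?A = "{i. Suc i < length xs \<and> xs!i = (1::nat) \<and> xs!Suc i = 1}"
  let ?B = "{i. Suc i < length (xs@[x]) \<and> (xs@[x])!i = (1::nat) \<and> (xs@[x])!Suc i = 1}"
  let ?C = "(if xs \<noteq> [] \<and> last xs = 1 \<and> x = (1::nat) then {length xs - 1} else {})"
  have "?B = ?A \<union> ?C"
  proof (intro set_eqI iffI)
    fix i assume "i \<in> ?B"
    then have i: "Suc i < Suc (length xs)" "(xs@[x])!i = 1" "(xs@[x])!Suc i = 1" by auto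
    show "i \<in> ?A \<union> ?C"
    proof (cases "Suc i < length xs")
      case True then show ?thesis using i by (auto simp: nth_append)
    next
      case False
      then have "Suc i = length xs" using i by auto
      then have ne: "xs \<noteq> []" by auto
      have "last xs = xs ! i" using ne \<open>Suc i = length xs\<close> by (simp add: last_conv_nth del: One_nat_def) (metis diff_Suc_1)
      then have "last xs = 1" "x = 1" using i \<open>Suc i = length xs\<close> by (auto simp: nth_append)
      then show ?thesis using \<open>Suc i = length xs\<close> ne by auto
    qed
  next
    fix i assume "i \<in> ?A \<union> ?C"
    then show "i \<in> ?B"
    proof
      assume "i \<in> ?A" then show ?thesis by (auto simp: nth_append)
    next
      assume "i \<in> ?C"
      then show ?thesis by (auto simp: nth_append last_conv_nth split: if_splits)
    qed
  qed
  moreover have "?A \<inter> ?C = {}" by (auto split: if_splits)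
  moreover have "finite ?A" by (rule finite_subset[of _ "{..<length xs}"]) auto
  ultimately show ?thesis unfolding occ11_alt by (simp add: card_Un_disjoint)
qed

lemma bin_even: "n > 0 \<Longrightarrow> bin (2*n) = bin n @ [0]"
  by (subst bin.simps) simp

lemma bin_odd: "bin (2*n+1) = bin n @ [1]"
  by (subst bin.simps) simp

lemma last_bin: assumes "n > 0" shows "bin n \<noteq> [] \<and> last (bin n) = n mod 2"
proof -
  have "bin n = bin (n div 2) @ [n mod 2]" using bin.simps[of n] assms by simp
  then show ?thesis by simp
qed

lemma rs_even: "rs (2*n) = rs n"
proof (cases "n = 0")
  case False
  show ?thesis unfolding rs_def a_w_def bin_even[OF False[unfolded neq0_conv]] occ11_snoc by simp
qed simp

lemma rs_odd: "rs (2*n+1) = (-1)^n * rs n"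
proof (cases "n = 0")
  case True
  have "bin 1 = [1]" using bin_odd[of 0] by (simp add: bin.simps[of 0])
  moreover have "bin 0 = []" by (simp add: bin.simps[of 0])
  ultimately show ?thesis unfolding True rs_def a_w_def by (simp add: occ_def)
next
  case False
  then have "bin n \<noteq> [] \<and> last (bin n) = n mod 2" using last_bin by simp
  then show ?thesis
    unfolding rs_def a_w_def bin_odd occ11_snoc by (auto simp: minus_one_power_iff odd_iff_mod_2_eq_one)
qed


lemma rs_pm: "rs n = 1 \<or> rs n = -1"
  by (simp add: rs_def minus_one_power_iff)

lemma rs_nz: "rs n \<noteq> 0"
  using rs_pm[of n] by auto

lemma length_factor[simp]: "length (factor s a N) = N"
  by (simp add: factor_def)

lemma nth_factor[simp]: "t < N \<Longrightarrow> factor s a N ! t = s (a+t)"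
  by (simp add: factor_def)

definition bord :: "'a list \<Rightarrow> nat \<Rightarrow> bool" where
  "bord w L \<longleftrightarrow> 0 < L \<and> 2*L \<le> length w \<and> take L w = drop (length w - L) w"

lemma bordered_iff: "bordered w \<longleftrightarrow> (\<exists>L. bord w L)"
proof
  assume "bordered w"
  then obtain x where "0 < length x" "2 * length x \<le> length w" "take (length x) w = x"
    "drop (length w - length x) w = x" unfolding bordered_def by blast
  then show "\<exists>L. bord w L" unfolding bord_def by (intro exI[of _ "length x"]) auto
next
  assume "\<exists>L. bord w L"
  then obtain L where L: "0 < L" "2*L \<le> length w" "take L w = drop (length w - L) w"
    unfolding bord_def by blast
  then show "bordered w" unfolding bordered_def
    by (intro exI[of _ "take L w"]) auto
qed

lemma bord_factor: "bord (factor s a N) L \<longleftrightarrow> 0 < L \<and> 2*L \<le> N \<and> (\<forall>t<L. s (a+t) = s (a+(N-L)+t))"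
proof -
  have "2*L \<le> N \<Longrightarrow> take L (factor s a N) = drop (N - L) (factor s a N) \<longleftrightarrow> (\<forall>t<L. s (a+t) = s (a+(N-L)+t))"
    by (auto simp: list_eq_iff_nth_eq add.assoc)
  then show ?thesis unfolding bord_def by auto
qed

definition ne :: "'a list \<Rightarrow> bool" where
  "ne w \<longleftrightarrow> (\<forall>L. bord w L \<longrightarrow> odd (length w - L))"

lemma odd_shift:
  assumes eq: "\<forall>t<L. rs (a+t) = rs (a+t+s)" and os: "odd s"
  shows "L \<le> 8"
proof (rule ccontr)
  assume L: "\<not> L \<le> 8"
  obtain h where s: "s = 2*h+1" using os by (auto elim: oddE)
  define n0 where "n0 = (a+1) div 2"
  have n0: "a \<le> 2*n0" "2*n0 \<le> a+1" unfolding n0_def by auto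
  have step: "rs (n0+h+i+1) = (-1)^h * rs (n0+h+i)" if i: "i < 4" for i
  proof -
    let ?n = "n0 + i"
    have t1: "2*?n - a < L" using L n0 i by arith
    have "rs (a + (2*?n - a)) = rs (a + (2*?n - a) + s)" using eq t1 by blast
    then have e1: "rs (2*?n) = rs (2*(?n+h)+1)" using n0 s by (simp add: algebra_simps)
    have t2: "2*?n+1 - a < L" using L n0 i by arith
    have "rs (a + (2*?n+1 - a)) = rs (a + (2*?n+1 - a) + s)" using eq t2 by blast
    then have e2: "rs (2*?n+1) = rs (2*(?n+h+1))" using n0 s by (simp add: algebra_simps)
    from e1 have e1': "rs ?n = (-1)^(?n+h) * rs (?n+h)" by (simp only: rs_even rs_odd)
    from e2 have e2': "(-1)^?n * rs ?n = rs (?n+h+1)" by (simp only: rs_even rs_odd)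
    have "rs (?n+h+1) = (-1)^?n * (-1)^(?n+h) * rs (?n+h)" using e1' e2' by simp
    also have "(-1)^?n * (-1)^(?n+h) = ((-1)^h :: int)"
      by (simp add: minus_one_power_iff)
    finally show ?thesis by (simp add: algebra_simps)
  qed
  define k where "k = (n0+h+1) div 2"
  obtain i1 where i1: "i1 \<le> 1" "2*k = n0+h+i1" unfolding k_def
    by (cases "even (n0+h)") (auto elim!: evenE oddE intro: that[of 0] that[of 1])
  have A: "rs (2*k+1) = (-1)^h * rs (2*k)" using step[of i1] i1 by (simp add: add.assoc)
  have e: "n0+h+(i1+2) = 2*(k+1)" using i1 by simp
  have "rs (n0+h+(i1+2)+1) = (-1)^h * rs (n0+h+(i1+2))" using i1 by (intro step) simp
  then have "rs (2*(k+1)+1) = (-1)^h * rs (2*(k+1))" unfolding e .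
  then have B': "(-1)^(k+1) * rs (k+1) = (-1)^h * rs (k+1)" by (simp only: rs_even rs_odd)
  have A': "(-1)^k * rs k = (-1)^h * rs k" using A by (simp only: rs_even rs_odd)
  have "(-1)^k = ((-1)^h :: int)" using A' rs_nz[of k] mult_right_cancel by blast
  moreover have "(-1)^(k+1) = ((-1)^h :: int)" using B' rs_nz[of "k+1"] mult_right_cancel by blast
  ultimately show False by simp
qed


lemma unb_crit:
  assumes n: "ne (factor rs a N)" and sh: "\<forall>L\<le>8. \<not> bord (factor rs a N) L"
  shows "unbordered (factor rs a N)"
proof -
  { fix L assume bL: "bord (factor rs a N) L"
    then have "\<not> L \<le> 8" using sh by blast
    then have L8: "L > 8" by simp
    have od: "odd (N - L)" using n bL unfolding ne_def by auto
    from bL have "0 < L" "2*L \<le> N" and eq: "\<forall>t<L. rs (a+t) = rs (a+(N-L)+t)"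
      by (auto simp: bord_factor)
    then have "\<forall>t<L. rs (a+t) = rs (a+t+(N-L))" by (simp add: add_ac)
    from odd_shift[OF this od] L8 have False by simp }
  then show ?thesis unfolding unbordered_def bordered_iff by blast
qed

lemma lift:
  assumes b: "b \<ge> 1" and M: "M \<ge> 1"
  and q: "q \<le> 1" and da: "2*b + q \<le> a + 1" "a \<le> 2*b+q"
  and dE: "2*(b+M-1) + q \<le> E" "E \<le> 2*(b+M-1)+q+1"
  and NE: "a + N = E + 1"
  and neV: "ne (factor rs b M)"
  and short: "\<forall>L\<le>2. bord (factor rs a N) L \<longrightarrow> odd (N - L)"
  shows "ne (factor rs a N)"
proof -
  { fix L assume bL: "bord (factor rs a N) L" and ev: "even (N-L)"
    then have "\<not> L \<le> 2" using short by blast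
    then have L3: "L \<ge> 3" by simp
    from bL have L: "0<L" "2*L \<le> N" and eq: "\<forall>t<L. rs (a+t) = rs (a+(N-L)+t)"
      by (auto simp: bord_factor)
    obtain p where p: "N - L = 2*p" using ev by (metis evenE)
    have eq2: "rs (a+t) = rs (a+t+2*p)" if "t < L" for t
    proof -
      have "rs (a+t) = rs (a+(N-L)+t)" using eq that by blast
      then show ?thesis using p by (simp add: add_ac)
    qed
    define n where "n = (a+1) div 2"
    have n: "a \<le> 2*n" "2*n \<le> a+1" unfolding n_def by auto
    have "rs (a + (2*n-a)) = rs (a + (2*n-a) + 2*p)" using n L3 by (intro eq2) arith
    then have "rs (2*(n+p)) = rs (2*n)" using n by (simp add: algebra_simps)
    then have r1: "rs (n+p) = rs n" by (simp only: rs_even)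
    have "rs (a + (2*n+1-a)) = rs (a + (2*n+1-a) + 2*p)" using n L3 by (intro eq2) arith
    then have "rs (2*(n+p)+1) = rs (2*n+1)" using n by (simp add: algebra_simps)
    then have "(-1)^(n+p) * rs (n+p) = (-1)^n * rs n" by (simp only: rs_odd)
    then have "(-1)^(n+p) * rs n = (-1)^n * rs n" using r1 by simp
    then have "(-1)^(n+p) = ((-1)^n :: int)" using rs_nz[of n] mult_right_cancel by blast
    then have "(-1)^n * (-1)^p = (-1)^n * (1::int)" by (simp add: power_add)
    then have "(-1)^p = (1::int)" by (subst (asm) mult_left_cancel) simp_all
    then have pe: "even p" by (cases "even p") auto
    have NLp: "N = L + 2*p" using p L by simp
    have E1: "2*b+2*M+q \<le> E + 2" "E + 1 \<le> 2*b+2*M+q" using dE b M by simp_all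
    have Mp: "p < M" using da(1) L3 NE NLp E1 by linarith
    have "2*M \<le> 4*p + 1" using L NE NLp E1 da(2) by linarith
    then have M2p: "M \<le> 2*p" by linarith
    have "bord (factor rs b M) (M-p)"
      unfolding bord_factor
    proof (intro conjI allI impI)
      show "0 < M - p" using Mp by simp
      show "2*(M-p) \<le> M" using M2p by simp
      fix j assume j: "j < M - p"
      define t where "t = 2*(b+j)+q-a"
      have jp: "j + p + 1 \<le> M" using j Mp by simp
      have t1: "a \<le> 2*(b+j)+q" using da(2) by simp
      have "2*b+2*j+q < a+L" using jp NE NLp E1 by linarith
      then have t2: "2*(b+j)+q < a+L" by simp
      have t: "t < L" "a + t = 2*(b+j)+q" unfolding t_def using t1 t2 by simp_all
      have e: "rs (2*(b+j)+q) = rs (2*(b+j+p)+q)"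
        using eq2[OF t(1)] t(2) by (simp add: algebra_simps)
      show "rs (b+j) = rs (b+(M-(M-p))+j)"
      proof (cases "q = 0")
        case True
        have "rs (2*(b+j)) = rs (2*(b+j+p))" using e unfolding True add_0_right .
        then have "rs (b+j) = rs (b+j+p)" by (simp only: rs_even)
        then show ?thesis using Mp by (simp add: add_ac)
      next
        case False
        then have "q = 1" using q by simp
        then have "rs (2*(b+j)+1) = rs (2*(b+j+p)+1)" using e by simp
        then have "(-1)^(b+j) * rs (b+j) = (-1)^(b+j+p) * rs (b+j+p)"
          by (simp only: rs_odd)
        moreover have "(-1)^(b+j+p) = ((-1)^(b+j) :: int)" using pe
          by (simp add: minus_one_power_iff)
        ultimately have "rs (b+j) = rs (b+j+p)"
          by (metis mult_left_cancel power_eq_0_iff zero_neq_neg_one)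
        then show ?thesis using Mp by (simp add: add_ac)
      qed
    qed
    then have "odd (length (factor rs b M) - (M-p))" using neV unfolding ne_def by blast
    moreover have "M - (M-p) = p" using Mp by simp
    ultimately have False using pe by simp }
  then show ?thesis unfolding ne_def length_factor by blast
qed


type_synonym state = "int list \<times> int \<times> int list \<times> int"

definition ext :: "int list \<Rightarrow> int \<Rightarrow> nat \<Rightarrow> int" where
  "ext w s q = (if even q then w!(q div 2) else s * (-1)^(q div 2) * w!(q div 2))"

lemma ext_rs:
  assumes w: "w = map rs [c..<c+6]" and s: "s = (-1)^c" and q: "q < 12"
  shows "rs (2*c+q) = ext w s q"
proof -
  have qd: "q div 2 < 6" using q by simp
  have wq: "w!(q div 2) = rs (c + q div 2)" using w qd by simp
  show ?thesis
  proof (cases "even q")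
    case True
    then have "2*c+q = 2*(c + q div 2)" by auto
    then have "rs (2*c+q) = rs (c + q div 2)" by (simp only: rs_even)
    then show ?thesis using True wq by (simp add: ext_def)
  next
    case False
    then have "2*c+q = 2*(c + q div 2) + 1" by (auto elim: oddE)
    then have "rs (2*c+q) = (-1)^(c + q div 2) * rs (c + q div 2)" by (simp only: rs_odd)
    then show ?thesis using False wq s by (simp add: ext_def power_add)
  qed
qed

definition fw :: "state \<Rightarrow> nat \<Rightarrow> int list" where
  "fw st d = (case st of (ws,ss,we,se) \<Rightarrow> map (\<lambda>j. ext ws ss (1+d+j)) [0..<8])"
definition lw :: "state \<Rightarrow> nat \<Rightarrow> int list" where
  "lw st dE = (case st of (ws,ss,we,se) \<Rightarrow> map (\<lambda>j. ext we se (1+dE+j)) [0..<8])"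
definition nst :: "state \<Rightarrow> nat \<Rightarrow> nat \<Rightarrow> state" where
  "nst st d dE = (case st of (ws,ss,we,se) \<Rightarrow>
     (map (\<lambda>j. ext ws ss (d+j)) [0..<6], (-1)^d, map (\<lambda>j. ext we se (4+dE+j)) [0..<6], (-1)^dE))"
definition okm :: "state \<Rightarrow> nat \<Rightarrow> nat \<Rightarrow> bool" where
  "okm st d dE = (\<forall>L\<in>set [1,2]. even (d+dE+L) \<longrightarrow> take L (fw st d) \<noteq> drop (8-L) (lw st dE))"
definition goodm :: "state \<Rightarrow> nat \<Rightarrow> nat \<Rightarrow> bool" where
  "goodm st d dE = (\<forall>L\<in>set [1..<9]. take L (fw st d) \<noteq> drop (8-L) (lw st dE))"
definition moves :: "(nat \<times> nat) list" where
  "moves = [(0,0),(0,1),(1,0),(1,1),(1,2),(2,1),(2,2)]"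

definition winv :: "nat \<Rightarrow> state \<Rightarrow> bool" where
  "winv M st \<longleftrightarrow> (\<exists>b. b \<ge> 1 \<and> ne (factor rs b M) \<and>
     st = (map rs [b-1..<b+5], (-1)^(b-1), map rs [b+M-5..<b+M+1], (-1)^(b+M-5)))"

lemma take_factor: "L \<le> N \<Longrightarrow> take L (factor s a N) = factor s a L"
  by (simp add: factor_def take_map)

lemma drop_factor: "L \<le> N \<Longrightarrow> drop (N-L) (factor s a N) = factor s (a+N-L) L"
  by (simp add: factor_def drop_map)

lemma move_core:
  assumes inv: "winv M st" and M: "M \<ge> 4" and mv: "(d,dE) \<in> set moves" and ok: "okm st d dE"
  shows "winv (2*M+dE-d) (nst st d dE) \<and>
         (goodm st d dE \<longrightarrow> (\<exists>a. unbordered (factor rs a (2*M+dE-d))))"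
proof -
  obtain b where b: "b \<ge> 1" and neV: "ne (factor rs b M)"
    and st: "st = (map rs [b-1..<b+5], (-1)^(b-1), map rs [b+M-5..<b+M+1], (-1)^(b+M-5))"
    using inv unfolding winv_def by blast
  define c1 where "c1 = b - 1"
  define c2 where "c2 = b + M - 5"
  define a where "a = 2*b - 1 + d"
  define E where "E = 2*(b+M-1) + dE"
  define N where "N = 2*M+dE-d"
  have dd: "d \<le> 2" "dE \<le> 2" using mv by (auto simp: moves_def)
  have e1: "c1 + 6 = b + 5" unfolding c1_def using b by simp
  have e2: "c2 + 6 = b + M + 1" unfolding c2_def using b M by simp
  have w1: "map rs [b-1..<b+5] = map rs [c1..<c1+6]" by (simp only: e1) (simp add: c1_def)
  have w2: "map rs [b+M-5..<b+M+1] = map rs [c2..<c2+6]" by (simp only: e2) (simp add: c2_def)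
  have st': "st = (map rs [c1..<c1+6], (-1)^c1, map rs [c2..<c2+6], (-1)^c2)"
    using st w1 w2 unfolding c1_def c2_def by simp
  have aN: "a + N = E + 1" unfolding a_def N_def E_def using b M dd by simp
  have fw: "fw st d = factor rs a 8"
  proof -
    have "ext (map rs [c1..<c1+6]) ((-1)^c1) (1+d+j) = rs (a+j)" if "j < 8" for j
    proof -
      have "rs (2*c1 + (1+d+j)) = ext (map rs [c1..<c1+6]) ((-1)^c1) (1+d+j)"
        using that dd by (intro ext_rs) auto
      moreover have "2*c1 + (1+d+j) = a + j" unfolding c1_def a_def using b by simp
      ultimately show ?thesis by metis
    qed
    then show ?thesis unfolding fw_def st' factor_def by (simp add: list_eq_iff_nth_eq)
  qed
  have lw: "lw st dE = factor rs (E-7) 8"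
  proof -
    have "ext (map rs [c2..<c2+6]) ((-1)^c2) (1+dE+j) = rs (E-7+j)" if "j < 8" for j
    proof -
      have "rs (2*c2 + (1+dE+j)) = ext (map rs [c2..<c2+6]) ((-1)^c2) (1+dE+j)"
        using that dd by (intro ext_rs) auto
      moreover have "2*c2 + (1+dE+j) = E - 7 + j" unfolding c2_def E_def using b M by simp
      ultimately show ?thesis by metis
    qed
    then show ?thesis unfolding lw_def st' factor_def by (simp add: list_eq_iff_nth_eq)
  qed
  have bordeq: "take L (fw st d) = drop (8-L) (lw st dE)"
    if "bord (factor rs a N) L" "L \<le> 8" for L
  proof -
    from that have L: "0 < L" "2*L \<le> N" and tk: "take L (factor rs a N) = drop (N-L) (factor rs a N)"
      unfolding bord_def by auto
    have "take L (fw st d) = factor rs a L" unfolding fw using that(2) by (simp add: take_factor)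
    also have "\<dots> = take L (factor rs a N)" using L by (simp add: take_factor)
    also have "\<dots> = drop (N-L) (factor rs a N)" by (rule tk)
    also have "\<dots> = factor rs (a+N-L) L" using L by (simp add: drop_factor)
    also have "\<dots> = factor rs (E-7+8-L) L"
    proof -
      have "a + N - L = E - 7 + 8 - L" using aN L that(2) b M unfolding E_def by simp
      then show ?thesis by simp
    qed
    also have "\<dots> = drop (8-L) (lw st dE)" unfolding lw using that(2) by (simp add: drop_factor)
    finally show ?thesis .
  qed
  have par: "even (N - L) \<longleftrightarrow> even (d+dE+L)" if "L \<le> N" for L
  proof -
    have "(N - L) + (d+dE+L) = 2*(M+dE)" using that M dd unfolding N_def by simp
    then show ?thesis by (metis dvd_triv_left even_add)
  qed
  have short: "\<forall>L\<le>2. bord (factor rs a N) L \<longrightarrow> odd (N - L)"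
  proof (intro allI impI)
    fix L assume L2: "L \<le> 2" and bL: "bord (factor rs a N) L"
    then have L: "0 < L" "2*L \<le> N" unfolding bord_def by auto
    have eq: "take L (fw st d) = drop (8-L) (lw st dE)" using bordeq bL L2 by simp
    have "L \<in> set [1,2]" using L L2 by auto
    then have "even (d+dE+L) \<longrightarrow> take L (fw st d) \<noteq> drop (8-L) (lw st dE)"
      using ok unfolding okm_def by blast
    then show "odd (N - L)" using eq par L by auto
  qed
  define q :: nat where "q = (if d = 2 \<or> dE = 2 then 1 else 0)"
  have qc: "q \<le> 1" "2*b + q \<le> a + 1" "a \<le> 2*b+q" "2*(b+M-1) + q \<le> E" "E \<le> 2*(b+M-1)+q+1"
    using mv b unfolding q_def a_def E_def moves_def by auto
  have neU: "ne (factor rs a N)"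
    using lift[OF b _ qc(1) qc(2) qc(3) qc(4) qc(5) aN neV short] M by simp
  have a1: "a \<ge> 1" unfolding a_def using b by simp
  have nst: "nst st d dE = (map rs [a-1..<a+5], (-1)^(a-1), map rs [a+N-5..<a+N+1], (-1)^(a+N-5))"
  proof -
    have A: "map (\<lambda>j. ext (map rs [c1..<c1+6]) ((-1)^c1) (d+j)) [0..<6] = map rs [a-1..<a+5]"
    proof -
      have "ext (map rs [c1..<c1+6]) ((-1)^c1) (d+j) = rs (a-1+j)" if "j < 6" for j
      proof -
        have "rs (2*c1 + (d+j)) = ext (map rs [c1..<c1+6]) ((-1)^c1) (d+j)"
          using that dd by (intro ext_rs) auto
        moreover have "2*c1 + (d+j) = a - 1 + j" unfolding c1_def a_def using b by simp
        ultimately show ?thesis by metis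
      qed
      moreover have "a + 5 = (a - 1) + 6" using a1 by simp
      ultimately show ?thesis by (simp add: list_eq_iff_nth_eq)
    qed
    have B: "map (\<lambda>j. ext (map rs [c2..<c2+6]) ((-1)^c2) (4+dE+j)) [0..<6] = map rs [a+N-5..<a+N+1]"
    proof -
      define z where "z = a + N - 5"
      have z6: "a + N + 1 = z + 6" unfolding z_def using aN b M unfolding E_def by simp
      have "ext (map rs [c2..<c2+6]) ((-1)^c2) (4+dE+j) = rs (z+j)" if "j < 6" for j
      proof -
        have "rs (2*c2 + (4+dE+j)) = ext (map rs [c2..<c2+6]) ((-1)^c2) (4+dE+j)"
          using that dd by (intro ext_rs) auto
        moreover have "2*c2 + (4+dE+j) = z + j" unfolding c2_def z_def using aN b M unfolding E_def by simp
        ultimately show ?thesis by metis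
      qed
      then have "map (\<lambda>j. ext (map rs [c2..<c2+6]) ((-1)^c2) (4+dE+j)) [0..<6] = map rs [z..<z+6]"
        by (simp add: list_eq_iff_nth_eq)
      then show ?thesis unfolding z6 z_def .
    qed
    have C1: "(-1)^(a-1) = ((-1)^d :: int)"
    proof -
      have "a - 1 = 2*c1 + d" unfolding a_def c1_def using b by simp
      then show ?thesis by (simp add: power_add)
    qed
    have C2: "(-1)^(a+N-5) = ((-1)^dE :: int)"
    proof -
      have "a + N - 5 = 2*(c2+2) + dE" unfolding c2_def using aN b M unfolding E_def by simp
      then show ?thesis by (simp add: power_add)
    qed
    show ?thesis unfolding nst_def st' using A B C1 C2 by simp
  qed
  have W: "winv N (nst st d dE)" unfolding winv_def using a1 neU nst by blast
  have G: "goodm st d dE \<longrightarrow> (\<exists>a. unbordered (factor rs a N))"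
  proof
    assume g: "goodm st d dE"
    have "\<forall>L\<le>8. \<not> bord (factor rs a N) L"
    proof (intro allI impI notI)
      fix L assume L8: "L \<le> 8" and bL: "bord (factor rs a N) L"
      then have "0 < L" unfolding bord_def by auto
      then have "L \<in> set [1..<9]" using L8 by auto
      then show False using g bordeq[OF bL L8] unfolding goodm_def by blast
    qed
    then show "\<exists>a. unbordered (factor rs a N)" using unb_crit[OF neU] by blast
  qed
  show ?thesis using W G unfolding N_def by blast
qed

definition cert :: "state list" where
  "cert = [([-1, 1, 1, -1, 1, -1], -1, [-1, -1, 1, -1, -1, -1], 1),
    ([-1, 1, 1, -1, 1, -1], -1, [1, 1, -1, 1, -1, -1], 1),
    ([-1, 1, 1, -1, 1, 1], -1, [-1, -1, 1, -1, -1, -1], 1),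
    ([-1, 1, 1, -1, 1, 1], -1, [1, 1, -1, 1, -1, -1], 1),
    ([-1, 1, 1, 1, -1, 1], -1, [-1, -1, 1, -1, -1, -1], 1),
    ([-1, 1, 1, 1, -1, 1], -1, [1, 1, -1, 1, -1, -1], 1),
    ([1, 1, -1, -1, -1, 1], -1, [-1, -1, -1, 1, -1, -1], 1),
    ([1, 1, -1, 1, -1, -1], 1, [-1, 1, -1, -1, -1, 1], 1),
    ([1, 1, -1, 1, -1, -1], 1, [1, -1, -1, -1, -1, 1], 1),
    ([1, 1, -1, 1, 1, -1], -1, [-1, -1, -1, 1, -1, -1], 1),
    ([1, 1, -1, 1, 1, -1], -1, [-1, -1, 1, -1, -1, -1], 1),
    ([1, 1, -1, 1, 1, -1], -1, [1, 1, -1, 1, -1, -1], 1),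
    ([1, 1, -1, 1, 1, 1], 1, [-1, 1, -1, -1, -1, 1], 1),
    ([1, 1, -1, 1, 1, 1], 1, [1, -1, -1, -1, -1, 1], 1),
    ([1, 1, 1, -1, -1, -1], 1, [-1, -1, -1, 1, -1, -1], 1),
    ([1, 1, 1, -1, -1, -1], 1, [-1, 1, -1, -1, -1, 1], 1),
    ([1, 1, 1, -1, -1, -1], 1, [1, -1, -1, -1, -1, 1], 1),
    ([1, 1, 1, -1, 1, 1], 1, [-1, -1, -1, 1, -1, -1], 1),
    ([1, 1, 1, -1, 1, 1], 1, [-1, -1, 1, -1, -1, -1], 1),
    ([1, 1, 1, -1, 1, 1], 1, [-1, 1, -1, -1, -1, 1], 1),
    ([1, 1, 1, -1, 1, 1], 1, [1, -1, -1, -1, -1, 1], 1),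
    ([1, 1, 1, -1, 1, 1], 1, [1, 1, -1, 1, -1, -1], 1),
    ([1, 1, 1, 1, -1, -1], -1, [-1, -1, 1, -1, -1, -1], 1),
    ([1, 1, 1, 1, -1, -1], -1, [1, 1, -1, 1, -1, -1], 1),
    ([1, 1, 1, 1, -1, 1], -1, [-1, -1, 1, -1, -1, -1], 1),
    ([1, 1, 1, 1, -1, 1], -1, [1, 1, -1, 1, -1, -1], 1)]"

definition cert_ok :: "state list \<Rightarrow> bool" where
  "cert_ok C \<longleftrightarrow> (\<forall>st\<in>set C.
     (\<exists>(d,dE)\<in>set moves. d = dE \<and> okm st d dE \<and> nst st d dE \<in> set C) \<and>
     (\<exists>(d,dE)\<in>set moves. d = dE+1 \<and> okm st d dE \<and> nst st d dE \<in> set C) \<and>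
     (\<exists>(d,dE)\<in>set moves. d = dE \<and> okm st d dE \<and> goodm st d dE) \<and>
     (\<exists>(d,dE)\<in>set moves. dE = d+1 \<and> okm st d dE \<and> goodm st d dE))"

lemma cert_ok: "cert_ok cert"
  by code_simp



fun rsc :: "nat \<Rightarrow> int" where
  "rsc n = (if n = 0 then 1 else if even n then rsc (n div 2) else (-1)^(n div 2) * rsc (n div 2))"

declare rsc.simps[simp del]

lemma rs0: "rs 0 = 1"
  by (simp add: rs_def a_w_def bin.simps[of 0] occ_def)

lemma rs_rsc: "rs = rsc"
proof
  fix n show "rs n = rsc n"
  proof (induction n rule: less_induct)
    case (less n)
    show ?case
    proof (cases "n = 0")
      case True then show ?thesis by (simp add: rs0 rsc.simps)
    next
      case False
      then have lt: "n div 2 < n" by simp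
      show ?thesis
      proof (cases "even n")
        case True
        then have "n = 2 * (n div 2)" by simp
        then have "rs n = rs (n div 2)" by (metis rs_even)
        then show ?thesis using less[OF lt] False True by (subst rsc.simps) simp
      next
        case od: False
        then have "n = 2 * (n div 2) + 1" by simp
        then have "rs n = (-1)^(n div 2) * rs (n div 2)" by (metis rs_odd)
        then show ?thesis using less[OF lt] \<open>n \<noteq> 0\<close> od by (subst rsc.simps) simp
      qed
    qed
  qed
qed

lemma ne_code[code]: "ne w \<longleftrightarrow> (\<forall>L\<in>set [1..<length w div 2 + 1]. take L w = drop (length w - L) w \<longrightarrow> odd (length w - L))"
proof -
  have "(0 < L \<and> 2*L \<le> length w) \<longleftrightarrow> L \<in> set [1..<length w div 2 + 1]" for L
    by auto
  then show ?thesis unfolding ne_def bord_def by blast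
qed

lemma bordered_code[code]: "bordered w \<longleftrightarrow> (\<exists>L\<in>set [1..<length w div 2 + 1]. take L w = drop (length w - L) w)"
proof -
  have "(0 < L \<and> 2*L \<le> length w) \<longleftrightarrow> L \<in> set [1..<length w div 2 + 1]" for L
    by auto
  then show ?thesis unfolding bordered_iff bord_def by blast
qed

lemma winv_base:
  assumes "b \<ge> 1" "ne (factor rsc b M)"
    "st = (map rsc [b-1..<b+5], (-1)^(b-1), map rsc [b+M-5..<b+M+1], (-1)^(b+M-5))"
  shows "winv M st"
  unfolding winv_def rs_rsc using assms by blast




lemma base_gen:
  assumes "b \<ge> 1" "ne (factor rsc b M)"
    "st = (map rsc [b-1..<b+5], (-1)^(b-1), map rsc [b+M-5..<b+M+1], (-1)^(b+M-5))"
    "st \<in> set cert"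
  shows "\<exists>st\<in>set cert. winv M st"
  using winv_base[OF assms(1-3)] assms(4) by blast

lemma base5: "\<exists>st\<in>set cert. winv 5 st"
  by (rule base_gen[where b=20 and st="([-1, 1, 1, -1, 1, -1], -1, [1, 1, -1, 1, -1, -1], 1)"]; code_simp)
lemma base6: "\<exists>st\<in>set cert. winv 6 st"
  by (rule base_gen[where b=21 and st="([1, 1, -1, 1, -1, -1], 1, [-1, 1, -1, -1, -1, 1], 1)"]; code_simp)
lemma base7: "\<exists>st\<in>set cert. winv 7 st"
  by (rule base_gen[where b=18 and st="([1, 1, -1, 1, 1, -1], -1, [1, 1, -1, 1, -1, -1], 1)"]; code_simp)
lemma base8: "\<exists>st\<in>set cert. winv 8 st"
  by (rule base_gen[where b=17 and st="([1, 1, 1, -1, 1, 1], 1, [1, 1, -1, 1, -1, -1], 1)"]; code_simp)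


lemma main_inv: "M \<ge> 5 \<Longrightarrow> \<exists>st\<in>set cert. winv M st"
proof (induction M rule: less_induct)
  case (less M)
  consider "M = 5" | "M = 6" | "M = 7" | "M = 8" | "M \<ge> 9" using less.prems by linarith
  then show ?case
  proof cases
    case 1 then show ?thesis using base5 by simp
  next
    case 2 then show ?thesis using base6 by simp
  next
    case 3 then show ?thesis using base7 by simp
  next
    case 4 then show ?thesis using base8 by simp
  next
    case 5
    show ?thesis
    proof (cases "even M")
      case True
      define K where "K = M div 2"
      have K: "5 \<le> K" "K < M" "M = 2*K" unfolding K_def using 5 True by auto
      obtain st where st: "st \<in> set cert" "winv K st" using less.IH[OF K(2) K(1)] by blast
      from cert_ok st(1) obtain d dE where m: "(d,dE) \<in> set moves" "d = dE" "okm st d dE"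
        "nst st d dE \<in> set cert" unfolding cert_ok_def by blast
      have "winv (2*K+dE-d) (nst st d dE)" using move_core[OF st(2) _ m(1) m(3)] K by simp
      then show ?thesis using m K by auto
    next
      case False
      define K where "K = (M+1) div 2"
      have K: "5 \<le> K" "K < M" "M = 2*K - 1" unfolding K_def using 5 False by auto
      obtain st where st: "st \<in> set cert" "winv K st" using less.IH[OF K(2) K(1)] by blast
      from cert_ok st(1) obtain d dE where m: "(d,dE) \<in> set moves" "d = dE + 1" "okm st d dE"
        "nst st d dE \<in> set cert" unfolding cert_ok_def by blast
      have "winv (2*K+dE-d) (nst st d dE)" using move_core[OF st(2) _ m(1) m(3)] K by simp
      moreover have "2*K+dE-d = M" using m(2) K by simp
      ultimately show ?thesis using m by auto
    qed
  qed
qed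

lemma small_unb: "unbordered (factor rs a N) \<longleftrightarrow> unbordered (factor rsc a N)"
  by (simp add: rs_rsc)

theorem theorem5:
  fixes n :: nat
  shows "\<exists>i. unbordered (factor rs i n)"
proof (cases "n < 10")
  case True
  have u: "unbordered (factor rsc 0 0)" "unbordered (factor rsc 0 1)" "unbordered (factor rsc 2 2)"
    "unbordered (factor rsc 1 3)" "unbordered (factor rsc 0 4)" "unbordered (factor rsc 6 5)"
    "unbordered (factor rsc 7 6)" "unbordered (factor rsc 0 7)" "unbordered (factor rsc 3 8)"
    "unbordered (factor rsc 4 9)"
    unfolding unbordered_def by code_simp+
  from True have "n \<in> {0,1,2,3,4,5,6,7,8,9}" by auto
  then show ?thesis unfolding small_unb using u by auto
next
  case False
  define M where "M = n div 2"
  have M: "M \<ge> 5" unfolding M_def using False by simp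
  obtain st where st: "st \<in> set cert" "winv M st" using main_inv[OF M] by blast
  show ?thesis
  proof (cases "even n")
    case True
    from cert_ok st(1) obtain d dE where m: "(d,dE) \<in> set moves" "d = dE" "okm st d dE"
      "goodm st d dE" unfolding cert_ok_def by blast
    have "\<exists>a. unbordered (factor rs a (2*M+dE-d))" using move_core[OF st(2) _ m(1) m(3)] M m(4) by simp
    moreover have "2*M+dE-d = n" using m(2) True unfolding M_def by simp
    ultimately show ?thesis by simp
  next
    case False
    from cert_ok st(1) obtain d dE where m: "(d,dE) \<in> set moves" "dE = d + 1" "okm st d dE"
      "goodm st d dE" unfolding cert_ok_def by blast
    have "\<exists>a. unbordered (factor rs a (2*M+dE-d))" using move_core[OF st(2) _ m(1) m(3)] M m(4) by simp
    moreover have "2*M+dE-d = n" using m(2) False unfolding M_def by simp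
    ultimately show ?thesis by simp
  qed
qed

end
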